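(* There exists a constant $C$ such that for all $n\in\mathbb{N}$ and all $\mathbf{x}\in C_0([0,1],G(\mathbb{R}^d))$ with $0<\|\mathbf{x}\|_{\phi_p}<\infty$, \[ \frac{d_\infty(\mathbf{x},\Upsilon_n(\mathbf{x}))}{\|\mathbf{x}\|_{\phi_p}}\leq C\sqrt{\phi_p(2^{-n})}. \]
   Context: Fix $d\geq2$, $p\in(2,3)$. $G(\mathbb{R}^d)$ is the set of $g=(g^1,g^2)\in\mathbb{R}^d\oplus(\mathbb{R}^d\otimes\mathbb{R}^d)$ whose symmetric part of $g^2$ is $\frac12g^1\otimes g^1$, with product $g\otimes h=(g^1+h^1,g^2+g^1\otimes h^1+h^2)$, identity $(0,0)=:\exp(0)$, inverse $(g^1,g^2)^{-1}=(-g^1,-g^2+g^1\otimes g^1)$; $\exp(a^1,a^2)=(a^1,a^2+\frac12a^1\otimes a^1)$ for antisymmetric $a^2$, $\exp(x):=\exp(x,0)$; dilation $\delta_\lambda\exp(a^1,a^2)=\exp(\lambda a^1,\lambda^2a^2)$; $\|g\|=\inf\{\sum_i|x^i|:x^i\in\mathbb{R}^d,\exp(x^1)\otimes\cdots\otimes\exp(x^k)=g\}$. $C_0([0,1],G(\mathbb{R}^d))$: continuous paths with $\mathbf{x}_0=\exp(0)$; $\mathbf{x}_{s,t}=\mathbf{x}_s^{-1}\otimes\mathbf{x}_t$; $\|\mathbf{x}\|_\psi=\sup_{0\leq s<t\leq1}\|\mathbf{x}_{s,t}\|/\psi(t-s)$; $d_\infty(\mathbf{x},\mathbf{y})=\sup_{0\leq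 s<t\leq1}\|\mathbf{x}_{s,t}^{-1}\otimes\mathbf{y}_{s,t}\|$. $\Upsilon_n(\mathbf{x})$ is the path with $\Upsilon_n(\mathbf{x})_{k/2^n}=\mathbf{x}_{k/2^n}$ for $k=0,\dots,2^n$ and $\Upsilon_n(\mathbf{x})_{k/2^n,\,k/2^n+t}=\delta_{2^nt}(\mathbf{x}_{k/2^n,(k+1)/2^n})$ for $t\in[0,2^{-n}]$, $k=0,\dots,2^n-1$. $\zeta(x)=\frac{1}{2\sqrt2}\int_0^x\sqrt{\log(1+u^{-2})/u}\,du$; $\phi_p$ is the $p$-th root of the smallest convex function on $[0,1]$ dominating $\zeta^p$. *)

theory Defs
  imports "HOL-Analysis.Analysis"
begin

text \<open>Step-2 free nilpotent group G(R^d): elements are pairs (g1, g2) with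
  g1 in R^d and g2 in R^d tensor R^d (a d x d matrix).\<close>

type_synonym ('d) grp = "(real^'d) \<times> ((real^'d)^'d)"

definition tens :: "real^('d::finite) \<Rightarrow> real^('d::finite) \<Rightarrow> real^'d^'d" where
  "tens a b = (\<chi> i j. a $ i * b $ j)"

definition Gset :: "('d::finite) grp set" where
  "Gset = {(g1, g2). (1/2) *\<^sub>R (g2 + transpose g2) = (1/2) *\<^sub>R tens g1 g1}"

definition gmul :: "('d::finite) grp \<Rightarrow> ('d::finite) grp \<Rightarrow> ('d::finite) grp" where
  "gmul g h = (fst g + fst h, snd g + tens (fst g) (fst h) + snd h)"

definition gid :: "('d::finite) grp" where
  "gid = (0, 0)"

definition ginv :: "('d::finite) grp \<Rightarrow> ('d::finite) grp" where
  "ginv g = (- fst g, - snd g + tens (fst g) (fst g))"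

text \<open>exp(a1,a2) for antisymmetric a2, and exp(x) = exp(x,0).\<close>
definition gexp2 :: "real^('d::finite) \<Rightarrow> real^'d^'d \<Rightarrow> ('d::finite) grp" where
  "gexp2 a1 a2 = (a1, a2 + (1/2) *\<^sub>R tens a1 a1)"

definition gexp :: "real^('d::finite) \<Rightarrow> ('d::finite) grp" where
  "gexp x = gexp2 x 0"

text \<open>Dilation: delta_lambda exp(a1,a2) = exp(lambda a1, lambda^2 a2), where
  a1 = g1 and a2 = g2 - 1/2 g1 tensor g1 is the antisymmetric part.\<close>
definition dil :: "real \<Rightarrow> ('d::finite) grp \<Rightarrow> ('d::finite) grp" where
  "dil r g = gexp2 (r *\<^sub>R fst g) (r\<^sup>2 *\<^sub>R (snd g - (1/2) *\<^sub>R tens (fst g) (fst g)))"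

definition ccnorm :: "('d::finite) grp \<Rightarrow> real" where
  "ccnorm g = Inf {sum_list (map norm xs) | xs.
                   foldr (\<lambda>v h. gmul (gexp v) h) xs gid = g}"

definition is_Gpath :: "(real \<Rightarrow> ('d::finite) grp) \<Rightarrow> bool" where
  "is_Gpath x \<longleftrightarrow> continuous_on {0..1} x \<and> (\<forall>t\<in>{0..1}. x t \<in> Gset) \<and> x 0 = gid"

definition incr :: "(real \<Rightarrow> ('d::finite) grp) \<Rightarrow> real \<Rightarrow> real \<Rightarrow> ('d::finite) grp" where
  "incr x s t = gmul (ginv (x s)) (x t)"

definition hnorm :: "(real \<Rightarrow> real) \<Rightarrow> (real \<Rightarrow> ('d::finite) grp) \<Rightarrow> ereal" where
  "hnorm \<psi> x = (SUP (s, t) \<in> {(s, t). 0 \<le> s \<and> s < t \<and> t \<le> 1}.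
                    ereal (ccnorm (incr x s t) / \<psi> (t - s)))"

definition dinf :: "(real \<Rightarrow> ('d::finite) grp) \<Rightarrow> (real \<Rightarrow> ('d::finite) grp) \<Rightarrow> ereal" where
  "dinf x y = (SUP (s, t) \<in> {(s, t). 0 \<le> s \<and> s < t \<and> t \<le> 1}.
                    ereal (ccnorm (gmul (ginv (incr x s t)) (incr y s t))))"

definition upsilon :: "nat \<Rightarrow> (real \<Rightarrow> ('d::finite) grp) \<Rightarrow> real \<Rightarrow> ('d::finite) grp" where
  "upsilon n x t =
     (let k = min (nat \<lfloor>2 ^ n * t\<rfloor>) (2 ^ n - 1);
          a = real k / 2 ^ n;
          b = (real k + 1) / 2 ^ n
      in gmul (x a) (dil (2 ^ n * (t - a)) (incr x a b)))"

definition zeta :: "real \<Rightarrow> real" where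
  "zeta x = 1 / (2 * sqrt 2) * integral {0..x} (\<lambda>u. sqrt (ln (1 + 1 / u\<^sup>2) / u))"

text \<open>phi_p: p-th root of the least convex majorant of zeta^p on [0,1]
  (taken as the pointwise infimum of all convex majorants).\<close>
definition phi :: "real \<Rightarrow> real \<Rightarrow> real" where
  "phi p x = (Inf {f x | f. convex_on {0..1} f \<and> (\<forall>y\<in>{0..1}. zeta y powr p \<le> f y)}) powr (1 / p)"

end

theory Submission
  imports Defs
begin


lemma tens_nth[simp]: "tens a b $ i $ j = a $ i * b $ j" by (simp add: tens_def)
lemma tens_add_left[simp]: "tens (a + b) c = tens a c + tens b c" by (simp add: vec_eq_iff algebra_simps)
lemma tens_add_right[simp]: "tens a (b + c) = tens a b + tens a c" by (simp add: vec_eq_iff algebra_simps)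
lemma tens_diff_left[simp]: "tens (a - b) c = tens a c - tens b c" by (simp add: vec_eq_iff algebra_simps)
lemma tens_diff_right[simp]: "tens a (b - c) = tens a b - tens a c" by (simp add: vec_eq_iff algebra_simps)
lemma tens_minus_left[simp]: "tens (- a) c = - tens a c" by (simp add: vec_eq_iff)
lemma tens_minus_right[simp]: "tens a (- c) = - tens a c" by (simp add: vec_eq_iff)
lemma tens_zero_left[simp]: "tens 0 c = 0" by (simp add: vec_eq_iff)
lemma tens_zero_right[simp]: "tens a 0 = 0" by (simp add: vec_eq_iff)
lemma tens_scale_left[simp]: "tens (r *\<^sub>R a) c = r *\<^sub>R tens a c" by (simp add: vec_eq_iff)
lemma tens_scale_right[simp]: "tens a (r *\<^sub>R c) = r *\<^sub>R tens a c" by (simp add: vec_eq_iff)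

lemma norm_tens: "norm (tens a b) = norm a * norm b"
proof -
  have r: "tens a b $ i = (a $ i) *\<^sub>R b" for i by (simp add: vec_eq_iff)
  have "norm (tens a b) = L2_set (\<lambda>i. norm (tens a b $ i)) UNIV"
    by (rule norm_vec_def)
  also have "\<dots> = L2_set (\<lambda>i. norm b * norm (a $ i)) UNIV"
    unfolding r by (simp only: norm_scaleR real_norm_def mult.commute)
  also have "\<dots> = norm b * L2_set (\<lambda>i. norm (a $ i)) UNIV"
    by (simp add: L2_set_right_distrib)
  also have "\<dots> = norm a * norm b" by (simp only: norm_vec_def[symmetric] mult.commute)
  finally show ?thesis .
qed

lemma gmul_assoc: "gmul (gmul a b) c = gmul a (gmul b c)"
  by (simp add: gmul_def algebra_simps)
lemma gmul_gid_left[simp]: "gmul gid a = a" by (simp add: gmul_def gid_def)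
lemma gmul_gid_right[simp]: "gmul a gid = a" by (simp add: gmul_def gid_def)
lemma gmul_ginv_left[simp]: "gmul (ginv a) a = gid" by (simp add: gmul_def ginv_def gid_def)
lemma gmul_ginv_right[simp]: "gmul a (ginv a) = gid" by (simp add: gmul_def ginv_def gid_def)
lemma ginv_gmul: "ginv (gmul a b) = gmul (ginv b) (ginv a)"
  by (simp add: gmul_def ginv_def algebra_simps)
lemma fst_gmul[simp]: "fst (gmul a b) = fst a + fst b" by (simp add: gmul_def)
lemma snd_gmul[simp]: "snd (gmul a b) = snd a + tens (fst a) (fst b) + snd b" by (simp add: gmul_def)
lemma fst_ginv[simp]: "fst (ginv a) = - fst a" by (simp add: ginv_def)
lemma snd_ginv[simp]: "snd (ginv a) = - snd a + tens (fst a) (fst a)" by (simp add: ginv_def)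
lemma fst_dil[simp]: "fst (dil r g) = r *\<^sub>R fst g" by (simp add: dil_def gexp2_def)
lemma snd_dil[simp]: "snd (dil r g) = r\<^sup>2 *\<^sub>R snd g" by (simp add: dil_def gexp2_def algebra_simps power2_eq_square)
lemma gexp_eq: "gexp v = (v, (1/2) *\<^sub>R tens v v)" by (simp add: gexp_def gexp2_def)

lemma Gset_iff: "g \<in> Gset \<longleftrightarrow> snd g + transpose (snd g) = tens (fst g) (fst g)"
proof -
  have "(1/2::real) *\<^sub>R (snd g + transpose (snd g)) = (1/2) *\<^sub>R tens (fst g) (fst g) \<longleftrightarrow>
        snd g + transpose (snd g) = tens (fst g) (fst g)" by simp
  then show ?thesis by (cases g) (simp add: Gset_def)
qed

lemma transpose_tens: "transpose (tens a b) = tens b a" by (simp add: transpose_def vec_eq_iff)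

lemma Gset_gmul: "a \<in> Gset \<Longrightarrow> b \<in> Gset \<Longrightarrow> gmul a b \<in> Gset"
  unfolding Gset_iff by (simp add: vec_eq_iff transpose_def algebra_simps)

lemma Gset_ginv: "a \<in> Gset \<Longrightarrow> ginv a \<in> Gset"
  unfolding Gset_iff by (simp add: vec_eq_iff transpose_def algebra_simps)

lemma Gset_dil: "a \<in> Gset \<Longrightarrow> dil r a \<in> Gset"
  unfolding Gset_iff by (simp add: vec_eq_iff transpose_def algebra_simps power2_eq_square) (metis (no_types, lifting) distrib_left mult.assoc)

lemma Gset_gid: "gid \<in> Gset" unfolding Gset_iff by (simp add: gid_def vec_eq_iff transpose_def)




definition W :: "(real^'d) list \<Rightarrow> ('d::finite) grp" where
  "W xs = foldr (\<lambda>v h. gmul (gexp v) h) xs gid"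
definition Lw :: "(real^('d::finite)) list \<Rightarrow> real" where
  "Lw xs = sum_list (map norm xs)"

lemma foldr_gmul: "foldr (\<lambda>v h. gmul (gexp v) h) xs h = gmul (W xs) h"
  by (induction xs) (simp_all add: W_def gmul_assoc)
lemma W_Cons: "W (v # xs) = gmul (gexp v) (W xs)" by (simp add: W_def)
lemma W_append: "W (xs @ ys) = gmul (W xs) (W ys)"
  unfolding W_def foldr_append by (rule foldr_gmul[unfolded W_def])
lemma Lw_Cons: "Lw (v # xs) = norm v + Lw xs" by (simp add: Lw_def)
lemma Lw_append: "Lw (xs @ ys) = Lw xs + Lw ys" by (simp add: Lw_def)
lemma Lw_nonneg: "0 \<le> Lw xs" unfolding Lw_def by (induction xs) auto

lemma W_bound: "norm (fst (W xs)) \<le> Lw xs \<and> norm (snd (W xs)) \<le> (Lw xs)\<^sup>2 / 2"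
proof (induction xs)
  case Nil then show ?case by (simp add: W_def Lw_def gid_def)
next
  case (Cons v xs)
  let ?w = "W xs"
  have f: "fst (W (v#xs)) = v + fst ?w" by (simp add: W_Cons gexp_eq)
  have s: "snd (W (v#xs)) = (1/2) *\<^sub>R tens v v + tens v (fst ?w) + snd ?w" by (simp add: W_Cons gexp_eq)
  have "norm (snd (W (v#xs))) \<le> norm ((1/2) *\<^sub>R tens v v) + norm (tens v (fst ?w)) + norm (snd ?w)"
    unfolding s by (meson add_mono norm_triangle_ineq order_trans order_refl)
  also have "\<dots> = (norm v)\<^sup>2/2 + norm v * norm (fst ?w) + norm (snd ?w)"
    by (simp add: norm_tens power2_eq_square)
  also have "\<dots> \<le> (norm v)\<^sup>2/2 + norm v * Lw xs + (Lw xs)\<^sup>2/2"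
    using Cons by (intro add_mono mult_left_mono) auto
  also have "\<dots> = (Lw (v#xs))\<^sup>2/2" by (simp add: Lw_Cons power2_eq_square algebra_simps)
  finally show ?case using Cons f norm_triangle_ineq[of v "fst ?w"] by (auto simp: Lw_Cons)
qed

definition CS :: "('d::finite) grp \<Rightarrow> real set" where
  "CS g = {sum_list (map norm xs) | xs. foldr (\<lambda>v h. gmul (gexp v) h) xs gid = g}"

lemma ccnorm_CS: "ccnorm g = Inf (CS g)" by (simp add: ccnorm_def CS_def)
lemma CS_iff: "l \<in> CS g \<longleftrightarrow> (\<exists>xs. W xs = g \<and> Lw xs = l)"
  by (auto simp: CS_def W_def Lw_def)

lemma ccnorm_le: "W xs = g \<Longrightarrow> ccnorm g \<le> Lw xs"
  unfolding ccnorm_CS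
  by (rule cInf_lower) (auto simp: CS_iff bdd_below_def intro!: exI[of _ 0] Lw_nonneg)

lemma ccnorm_ge:
  assumes "W xs0 = g"
  shows "norm (fst g) \<le> ccnorm g" "norm (snd g) \<le> (ccnorm g)\<^sup>2 / 2" "0 \<le> ccnorm g"
proof -
  have ne: "CS g \<noteq> {}" using assms CS_iff by blast
  show "norm (fst g) \<le> ccnorm g" unfolding ccnorm_CS
    by (rule cInf_greatest[OF ne]) (use W_bound in \<open>auto simp: CS_iff\<close>)
  show z: "0 \<le> ccnorm g" unfolding ccnorm_CS
    by (rule cInf_greatest[OF ne]) (auto simp: CS_iff Lw_nonneg)
  have "sqrt (2 * norm (snd g)) \<le> ccnorm g" unfolding ccnorm_CS
  proof (rule cInf_greatest[OF ne])
    fix l assume "l \<in> CS g"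
    then obtain xs where "W xs = g" "Lw xs = l" by (auto simp: CS_iff)
    then have "2 * norm (snd g) \<le> l\<^sup>2" "0 \<le> l" using W_bound[of xs] Lw_nonneg[of xs] by auto
    then show "sqrt (2 * norm (snd g)) \<le> l" by (simp add: real_le_lsqrt)
  qed
  then have "2 * norm (snd g) \<le> (ccnorm g)\<^sup>2" by (rule sqrt_le_D)
  then show "norm (snd g) \<le> (ccnorm g)\<^sup>2 / 2" by simp
qed

lemma W_comm: "W [a, b, -a, -b] = (0, tens a b - tens b a)"
proof -
  have "W [a, b, -a, -b] = gmul (gexp a) (gmul (gexp b) (gmul (gexp (-a)) (gexp (-b))))"
    by (simp add: W_def)
  also have "gmul (gexp (-a)) (gexp (-b)) = (- a - b, (1/2) *\<^sub>R tens a a + tens a b + (1/2) *\<^sub>R tens b b)"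
    by (simp add: gexp_eq gmul_def)
  also have "gmul (gexp b) \<dots> = (- a, (1/2) *\<^sub>R tens a a + tens a b - tens b a)"
    by (simp add: gexp_eq gmul_def vec_eq_iff algebra_simps)
  also have "gmul (gexp a) \<dots> = (0, tens a b - tens b a)"
    by (simp add: gexp_eq gmul_def vec_eq_iff algebra_simps)
  finally show ?thesis .
qed




lemma row_word:
  fixes A :: "real^'d^('d::finite)"
  shows "\<exists>xs. W xs = (0, (1/2) *\<^sub>R (tens (axis i 1) (A$i) - tens (A$i) (axis i 1))) \<and> Lw xs \<le> 4 * sqrt (norm A)"
proof -
  define c where "c = sqrt (norm (A$i) / 2)"
  define a where "a = c *\<^sub>R (axis i 1 :: real^'d)"
  define b where "b = (1 / (2*c)) *\<^sub>R (A$i)"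
  have c0: "0 \<le> c" by (simp add: c_def)
  have cc: "c * c = norm (A$i) / 2" unfolding c_def by simp
  have W: "W [a, b, -a, -b] = (0, (1/2) *\<^sub>R (tens (axis i 1) (A$i) - tens (A$i) (axis i 1)))"
  proof (cases "c = 0")
    case True
    then have "A$i = 0" using cc by simp
    then show ?thesis using True W_comm[of "0::real^'d" 0] by (simp add: a_def b_def)
  next
    case False
    then show ?thesis by (simp add: W_comm a_def b_def scaleR_diff_right)
  qed
  have "Lw [a, b, -a, -b] = 2 * norm a + 2 * norm b" by (simp add: Lw_def)
  also have "norm a = c" by (simp add: a_def c0)
  also have "norm b = c"
  proof (cases "c = 0")
    case True
    then show ?thesis using cc by (simp add: b_def)
  next
    case False
    then have "norm b = norm (A$i) / (2*c)" using c0 by (simp add: b_def)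
    also have "\<dots> = c" using False cc by (simp add: field_simps)
    finally show ?thesis .
  qed
  also have "2 * c + 2 * c \<le> 4 * sqrt (norm A)"
  proof -
    have "norm (A$i) \<le> norm A" by (rule Finite_Cartesian_Product.norm_nth_le)
    then have "norm (A$i) / 2 \<le> norm A" using norm_ge_zero[of "A$i"] by linarith
    then have "c \<le> sqrt (norm A)" unfolding c_def by simp
    then show ?thesis by simp
  qed
  finally show ?thesis using W by blast
qed

lemma set_word:
  fixes A :: "real^'d^('d::finite)"
  assumes "finite S"
  shows "\<exists>xs. W xs = (0, \<Sum>i\<in>S. (1/2) *\<^sub>R (tens (axis i 1) (A$i) - tens (A$i) (axis i 1)))
              \<and> Lw xs \<le> 4 * card S * sqrt (norm A)"
  using assms
proof (induction S rule: finite_induct)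
  case empty
  show ?case by (rule exI[of _ "[]"]) (simp add: W_def Lw_def gid_def)
next
  case (insert i S)
  obtain xs where xs: "W xs = (0, \<Sum>i\<in>S. (1/2) *\<^sub>R (tens (axis i 1) (A$i) - tens (A$i) (axis i 1)))"
      "Lw xs \<le> 4 * card S * sqrt (norm A)" using insert.IH by blast
  obtain ys where ys: "W ys = (0, (1/2) *\<^sub>R (tens (axis i 1) (A$i) - tens (A$i) (axis i 1)))"
      "Lw ys \<le> 4 * sqrt (norm A)" using row_word by blast
  show ?case
  proof (intro exI conjI)
    show "W (ys @ xs) = (0, \<Sum>i\<in>insert i S. (1/2) *\<^sub>R (tens (axis i 1) (A$i) - tens (A$i) (axis i 1)))"
      using insert.hyps by (simp add: W_append xs ys gmul_def)
    show "Lw (ys @ xs) \<le> 4 * card (insert i S) * sqrt (norm A)"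
      using insert.hyps xs ys by (simp add: Lw_append algebra_simps)
  qed
qed

lemma antisym_decomp:
  fixes A :: "real^'d^('d::finite)"
  assumes "transpose A = - A"
  shows "A = (\<Sum>i\<in>UNIV. (1/2) *\<^sub>R (tens (axis i 1) (A$i) - tens (A$i) (axis i 1)))"
proof -
  have t: "A $ j $ k = - A $ k $ j" for j k
    using arg_cong[OF assms, of "\<lambda>M. M $ k $ j"] by (simp add: transpose_def)
  have comp: "A $ k $ j = (\<Sum>i\<in>UNIV. (1/2) * ((axis i 1 :: real^'d) $ k * A $ i $ j - A $ i $ k * (axis i 1 :: real^'d) $ j))" for k j
  proof -
    have s1: "(\<Sum>i\<in>UNIV. (axis i 1 :: real^'d) $ k * A $ i $ j) = A $ k $ j"
      by (simp add: axis_def if_distrib[of "\<lambda>x. x * _"] cong: if_cong)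
    have s2: "(\<Sum>i\<in>UNIV. A $ i $ k * (axis i 1 :: real^'d) $ j) = A $ j $ k"
      by (simp add: axis_def if_distrib[of "\<lambda>x. _ * x"] cong: if_cong)
    have "(\<Sum>i\<in>UNIV. (1/2) * ((axis i 1 :: real^'d) $ k * A $ i $ j - A $ i $ k * (axis i 1 :: real^'d) $ j))
          = (1/2) * ((\<Sum>i\<in>UNIV. (axis i 1 :: real^'d) $ k * A $ i $ j) - (\<Sum>i\<in>UNIV. A $ i $ k * (axis i 1 :: real^'d) $ j))"
      by (simp add: sum_distrib_left sum_subtractf right_diff_distrib)
    also have "\<dots> = (1/2) * A $ k $ j - (1/2) * A $ j $ k" using s1 s2 by simp
    finally have "(\<Sum>i\<in>UNIV. (1/2) * ((axis i 1 :: real^'d) $ k * A $ i $ j - A $ i $ k * (axis i 1 :: real^'d) $ j))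
          = (1/2) * A $ k $ j - (1/2) * A $ j $ k" .
    then show "A $ k $ j = (\<Sum>i\<in>UNIV. (1/2) * ((axis i 1 :: real^'d) $ k * A $ i $ j - A $ i $ k * (axis i 1 :: real^'d) $ j))"
      using t[of j k] by simp
  qed
  show ?thesis
    apply (simp add: vec_eq_iff)
    apply (subst comp)
    apply simp
    done
qed

lemma Gset_word:
  fixes g :: "('d::finite) grp"
  assumes "g \<in> Gset"
  shows "\<exists>xs. W xs = g \<and> Lw xs \<le> (1 + 4 * CARD('d)) * (norm (fst g) + sqrt (norm (snd g)))"
proof -
  define A where "A = snd g - (1/2) *\<^sub>R tens (fst g) (fst g)"
  have sym: "snd g + transpose (snd g) = tens (fst g) (fst g)" using assms Gset_iff by blast
  have e: "snd g $ i $ j + snd g $ j $ i = fst g $ i * fst g $ j" for i j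
    using arg_cong[OF sym, of "\<lambda>M. M $ i $ j"] by (simp add: transpose_def)
  have "transpose A = - A"
    unfolding A_def
  proof (simp add: vec_eq_iff transpose_def, intro allI)
    fix i j
    show "snd g $ j $ i - fst g $ j * fst g $ i / 2 = fst g $ i * fst g $ j / 2 - snd g $ i $ j"
      using e[of i j] by (simp add: algebra_simps)
  qed
  then have Ad: "A = (\<Sum>i\<in>UNIV. (1/2) *\<^sub>R (tens (axis i 1) (A$i) - tens (A$i) (axis i 1)))"
    by (rule antisym_decomp)
  obtain xs where xs: "W xs = (0, A)" "Lw xs \<le> 4 * CARD('d) * sqrt (norm A)"
    using set_word[of UNIV A] Ad by auto
  have g: "W (fst g # xs) = g" 
    by (simp add: W_Cons xs gexp_eq gmul_def A_def)
  have "norm A \<le> norm (snd g) + (1/2) * (norm (fst g))\<^sup>2"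
    unfolding A_def using norm_triangle_ineq4[of "snd g" "(1/2) *\<^sub>R tens (fst g) (fst g)"]
    by (simp add: norm_tens power2_eq_square)
  also have "\<dots> \<le> (sqrt (norm (snd g)) + norm (fst g))\<^sup>2"
    by (simp add: power2_eq_square algebra_simps)
  finally have "sqrt (norm A) \<le> sqrt (norm (snd g)) + norm (fst g)"
    by (simp add: real_le_lsqrt)
  then have "4 * CARD('d) * sqrt (norm A) \<le> 4 * CARD('d) * (sqrt (norm (snd g)) + norm (fst g))"
    by (simp add: mult_left_mono)
  then have "Lw (fst g # xs) \<le> norm (fst g) + 4 * CARD('d) * (sqrt (norm (snd g)) + norm (fst g))"
    using xs(2) unfolding Lw_Cons by linarith
  also have "\<dots> \<le> (1 + 4 * CARD('d)) * (norm (fst g) + sqrt (norm (snd g)))"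
    by (simp add: algebra_simps)
  finally show ?thesis using g by blast
qed

lemma ccnorm_upper:
  fixes g :: "('d::finite) grp"
  assumes "g \<in> Gset"
  shows "ccnorm g \<le> (1 + 4 * CARD('d)) * (norm (fst g) + sqrt (norm (snd g)))"
  using Gset_word[OF assms] ccnorm_le by (meson order_trans)

lemma ccnorm_lower:
  fixes g :: "('d::finite) grp"
  assumes "g \<in> Gset"
  shows "norm (fst g) \<le> ccnorm g" "norm (snd g) \<le> (ccnorm g)\<^sup>2 / 2" "0 \<le> ccnorm g"
  using Gset_word[OF assms] ccnorm_ge by blast+




lemma norm7: "norm (a+b+c+d+e+f-(g::'a::real_normed_vector)) \<le> norm a + norm b + norm c + norm d + norm e + norm f + norm g"
proof -
  have "norm (a+b+c+d+e+f-g) \<le> norm (a+b+c+d+e+f) + norm g" by (rule norm_triangle_ineq4)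
  moreover have "norm (a+b+c+d+e+f) \<le> norm (a+b+c+d+e) + norm f" by (rule norm_triangle_ineq)
  moreover have "norm (a+b+c+d+e) \<le> norm (a+b+c+d) + norm e" by (rule norm_triangle_ineq)
  moreover have "norm (a+b+c+d) \<le> norm (a+b+c) + norm d" by (rule norm_triangle_ineq)
  moreover have "norm (a+b+c) \<le> norm (a+b) + norm c" by (rule norm_triangle_ineq)
  moreover have "norm (a+b) \<le> norm a + norm b" by (rule norm_triangle_ineq)
  ultimately show ?thesis by linarith
qed

lemma ndiff: "norm a \<le> r \<Longrightarrow> norm b \<le> r \<Longrightarrow> norm (a - b) \<le> 2 * r"
  using norm_triangle_ineq4[of a b] by linarith

lemma key_est:
  fixes E F D G M :: "('d::finite) grp"
  assumes e: "norm (fst E) \<le> r" "norm (snd E) \<le> r\<^sup>2"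
      and f: "norm (fst F) \<le> r" "norm (snd F) \<le> r\<^sup>2"
      and d: "norm (fst D) \<le> r" "norm (snd D) \<le> r\<^sup>2"
      and g: "norm (fst G) \<le> r" "norm (snd G) \<le> r\<^sup>2"
      and m: "norm (fst M) \<le> R" and r: "0 \<le> r" and R: "0 \<le> R"
  defines "Z \<equiv> gmul (ginv (gmul (gmul (ginv E) M) F)) (gmul (gmul (ginv D) M) G)"
  shows "norm (fst Z) \<le> 4 * r" "norm (snd Z) \<le> 16 * r\<^sup>2 + 8 * r * R"
proof -
  let ?e1 = "fst E" and ?f1 = "fst F" and ?d1 = "fst D" and ?g1 = "fst G" and ?m1 = "fst M"
  let ?e2 = "snd E" and ?f2 = "snd F" and ?d2 = "snd D" and ?g2 = "snd G"
  define U1 where "U1 = - ?e1 + ?m1 + ?f1"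
  define V1 where "V1 = - ?d1 + ?m1 + ?g1"
  have z1: "fst Z = (?e1 - ?d1) + (?g1 - ?f1)" by (simp add: Z_def algebra_simps)
  have "norm (fst Z) \<le> norm (?e1 - ?d1) + norm (?g1 - ?f1)" unfolding z1 by (rule norm_triangle_ineq)
  also have "\<dots> \<le> 2 * r + 2 * r" using e f d g by (intro add_mono ndiff) auto
  finally show "norm (fst Z) \<le> 4 * r" by simp
  have z2: "snd Z = (?e2 - ?d2) + (tens ?d1 ?d1 - tens ?e1 ?e1) + tens (?e1 - ?d1) ?m1
      + (tens ?e1 ?f1 - tens ?d1 ?g1) + tens ?m1 (?g1 - ?f1) + (?g2 - ?f2) - tens U1 (V1 - U1)"
    unfolding Z_def U1_def V1_def by (simp add: vec_eq_iff algebra_simps)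
  have n1: "norm (?e2 - ?d2) \<le> 2 * r\<^sup>2" using e d by (intro ndiff) auto
  have n2: "norm (tens ?d1 ?d1 - tens ?e1 ?e1) \<le> 2 * r\<^sup>2"
    using e d r by (intro ndiff) (auto simp: norm_tens power2_eq_square intro: mult_mono)
  have n3: "norm (tens (?e1 - ?d1) ?m1) \<le> 2 * r * R"
    unfolding norm_tens using e d m r by (intro mult_mono ndiff) auto
  have n4: "norm (tens ?e1 ?f1 - tens ?d1 ?g1) \<le> 2 * r\<^sup>2"
    using e f d g r by (intro ndiff) (auto simp: norm_tens power2_eq_square intro: mult_mono)
  have n5: "norm (tens ?m1 (?g1 - ?f1)) \<le> R * (2 * r)"
    unfolding norm_tens using g f m r R by (intro mult_mono ndiff) auto
  have n6: "norm (?g2 - ?f2) \<le> 2 * r\<^sup>2" using g f by (intro ndiff) auto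
  have u1: "norm U1 \<le> 2 * r + R"
    unfolding U1_def using e f m norm_triangle_ineq[of "- ?e1 + ?m1" ?f1] norm_triangle_ineq[of "- ?e1" ?m1]
    by simp
  have vu: "V1 - U1 = (?e1 - ?d1) + (?g1 - ?f1)" unfolding U1_def V1_def by (simp add: algebra_simps)
  have vu1: "norm (V1 - U1) \<le> 4 * r"
    unfolding vu using norm_triangle_ineq[of "?e1 - ?d1" "?g1 - ?f1"] ndiff[OF e(1) d(1)] ndiff[OF g(1) f(1)] by linarith
  have n7: "norm (tens U1 (V1 - U1)) \<le> (2 * r + R) * (4 * r)"
    unfolding norm_tens using u1 vu1 r R by (intro mult_mono) auto
  have "norm (snd Z) \<le> 2 * r\<^sup>2 + 2 * r\<^sup>2 + 2 * r * R + 2 * r\<^sup>2 + R * (2 * r) + 2 * r\<^sup>2 + (2 * r + R) * (4 * r)"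
  proof -
    have "norm (snd Z) \<le> norm (?e2 - ?d2) + norm (tens ?d1 ?d1 - tens ?e1 ?e1) + norm (tens (?e1 - ?d1) ?m1)
      + norm (tens ?e1 ?f1 - tens ?d1 ?g1) + norm (tens ?m1 (?g1 - ?f1)) + norm (?g2 - ?f2) + norm (tens U1 (V1 - U1))"
      unfolding z2 by (rule norm7)
    then show ?thesis using n1 n2 n3 n4 n5 n6 n7 by linarith
  qed
  then show "norm (snd Z) \<le> 16 * r\<^sup>2 + 8 * r * R" by (simp add: power2_eq_square algebra_simps)
qed




definition fz :: "real \<Rightarrow> real" where "fz u = sqrt (ln (1 + 1 / u\<^sup>2) / u)"

lemma zeta_fz: "zeta x = 1 / (2 * sqrt 2) * integral {0..x} fz"
  by (simp add: zeta_def fz_def[abs_def])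

lemma ln_le_quarter: assumes "0 \<le> (z::real)" shows "ln (1 + z) \<le> 4 * z powr (1/4)"
proof -
  define w where "w = z powr (1/4::real)"
  have w0: "0 \<le> w" by (simp add: w_def)
  have "w ^ 4 = z"
  proof (cases "z = 0")
    case True then show ?thesis by (simp add: w_def)
  next
    case False
    then have "w ^ 4 = w powr (real 4)" using w0 assms by (simp add: powr_realpow w_def)
    also have "\<dots> = z" using assms by (simp add: w_def powr_powr)
    finally show ?thesis .
  qed
  then have "1 + z \<le> (1 + w) ^ 4" using w0 by (auto simp: power_def algebra_simps numeral_eq_Suc)
  then have "ln (1 + z) \<le> ln ((1 + w) ^ 4)" using assms w0 by (subst ln_le_cancel_iff) auto
  also have "\<dots> = 4 * ln (1 + w)" using w0 by (simp add: ln_realpow)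
  also have "\<dots> \<le> 4 * w" using ln_add_one_self_le_self[OF w0] by simp
  finally show ?thesis by (simp add: w_def)
qed

lemma fz_nonneg: "0 \<le> u \<Longrightarrow> 0 \<le> fz u"
  by (simp add: fz_def)

lemma fz_bound: assumes "0 < u" shows "fz u \<le> 2 * u powr (-3/4)"
proof -
  have "ln (1 + 1 / u\<^sup>2) \<le> 4 * (1 / u\<^sup>2) powr (1/4)" by (rule ln_le_quarter) simp
  also have "(1 / u\<^sup>2) powr (1/4) = u powr (-1/2)"
  proof -
    have "u\<^sup>2 = u powr 2" using assms by (simp add: powr_numeral)
    then have "1 / u\<^sup>2 = u powr (-2)" by (simp add: powr_minus divide_inverse)
    then show ?thesis using assms by (simp add: powr_powr)
  qed
  finally have "ln (1 + 1 / u\<^sup>2) / u \<le> 4 * u powr (-1/2) / u" using assms by (simp add: divide_right_mono)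
  also have "4 * u powr (-1/2) / u = (2 * u powr (-3/4))\<^sup>2"
  proof -
    have a: "u powr (-1/2) / u = u powr (-3/2)"
    proof -
      have i: "u powr (-1) = inverse u" using assms by (simp add: powr_minus)
      have "u powr (-1/2) / u = u powr (-1/2) * u powr (-1)" by (simp only: i divide_inverse)
      also have "\<dots> = u powr (-1/2 + -1)" by (rule powr_add[symmetric])
      finally show ?thesis by simp
    qed
    have b: "(u powr (-3/4))\<^sup>2 = u powr (-3/2)"
    proof -
      have "(u powr (-3/4))\<^sup>2 = u powr (-3/4) * u powr (-3/4)" by (simp add: power2_eq_square)
      also have "\<dots> = u powr (-3/4 + -3/4)" by (rule powr_add[symmetric])
      finally show ?thesis by simp
    qed
    show ?thesis using a b by (simp add: power_mult_distrib)
  qed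
  finally show ?thesis unfolding fz_def by (intro real_le_lsqrt) auto
qed

lemma fz_meas: "fz \<in> borel_measurable (lebesgue_on S)"
proof -
  have "fz \<in> borel_measurable borel" unfolding fz_def by measurable
  from measurable_comp[OF id_borel_measurable_lebesgue_on this] show ?thesis by (simp add: comp_def)
qed

lemma fz_integrable: assumes "0 \<le> x" shows "fz integrable_on {0..x}"
proof (rule measurable_bounded_by_integrable_imp_integrable_real)
  show "fz \<in> borel_measurable (lebesgue_on {0..x})" by (rule fz_meas)
  show "(\<lambda>u. 2 * u powr (-3/4)) integrable_on {0..x}"
  proof -
    have "(\<lambda>u. u powr (-3/4)) integrable_on {0..x}" by (rule integrable_on_powr_from_0) (use assms in auto)
    from integrable_on_cmult_left[OF this, of 2] show ?thesis by simp
  qed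
  show "\<bar>fz u\<bar> \<le> 2 * u powr (-3/4)" if "u \<in> {0..x}" for u
  proof (cases "u = 0")
    case True then show ?thesis by (simp add: fz_def)
  next
    case False then show ?thesis using that fz_bound fz_nonneg by auto
  qed
qed auto

lemma zeta_mono: assumes "0 \<le> y" "y \<le> y'" shows "zeta y \<le> zeta y'"
proof -
  have "integral {0..y} fz \<le> integral {0..y'} fz"
    using assms by (intro integral_subset_le fz_integrable) (auto intro: fz_nonneg)
  then show ?thesis unfolding zeta_fz by (simp add: divide_right_mono)
qed

lemma zeta_nonneg: assumes "0 \<le> y" shows "0 \<le> zeta y"
proof -
  have "0 \<le> integral {0..y} fz" using assms by (auto intro!: integral_nonneg fz_integrable fz_nonneg)
  then show ?thesis unfolding zeta_fz by simp
qed

lemma zeta_pos: assumes "0 < x" shows "0 < zeta x"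
proof -
  define c where "c = fz x"
  have c: "0 < c" unfolding c_def fz_def using assms by (simp add: ln_gt_zero)
  have l: "((\<lambda>u. (c / x) * u powr 1) has_integral (c / x) * (x powr (1+1) / (1+1))) {0..x}"
    using has_integral_powr_from_0[of 1 x] assms by (intro has_integral_mult_right) auto
  have i: "(fz has_integral integral {0..x} fz) {0..x}"
    using fz_integrable assms by (simp add: integrable_integral)
  have "(c / x) * (x powr (1+1) / (1+1)) \<le> integral {0..x} fz"
  proof (rule has_integral_le[OF l i])
    fix u assume u: "u \<in> {0..x}"
    show "(c / x) * u powr 1 \<le> fz u"
    proof (cases "u = 0")
      case True then show ?thesis by (simp add: fz_def)
    next
      case False
      then have u0: "0 < u" using u by auto
      have "(c / x) * u powr 1 \<le> c" using u0 u c assms by (simp add: field_simps)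
      also have "c \<le> fz u"
      proof -
        have "1 / x\<^sup>2 \<le> 1 / u\<^sup>2" using u u0 by (simp add: field_simps power_mono)
        then have a: "ln (1 + 1 / x\<^sup>2) \<le> ln (1 + 1 / u\<^sup>2)"
          by (subst ln_le_cancel_iff) (auto intro: add_pos_nonneg)
        have "ln (1 + 1 / x\<^sup>2) / x \<le> ln (1 + 1 / x\<^sup>2) / u"
          using u u0 assms by (intro divide_left_mono) auto
        also have "\<dots> \<le> ln (1 + 1 / u\<^sup>2) / u" using a u0 by (simp add: divide_right_mono)
        finally show ?thesis unfolding c_def fz_def by simp
      qed
      finally show ?thesis .
    qed
  qed
  moreover have "0 < (c / x) * (x powr (1+1) / (1+1))" using c assms by simp
  ultimately show ?thesis unfolding zeta_fz by simp
qed




definition Phi :: "real \<Rightarrow> real \<Rightarrow> real" where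
  "Phi p x = Inf {f x | f. convex_on {0..1} f \<and> (\<forall>y\<in>{0..1}. zeta y powr p \<le> f y)}"

lemma phi_Phi: "phi p x = Phi p x powr (1/p)" by (simp add: phi_def Phi_def)

lemma zeta_le1: "y \<in> {0..1} \<Longrightarrow> zeta y \<le> zeta 1" by (auto intro: zeta_mono)

lemma const_in:
  assumes "0 \<le> p"
  shows "convex_on {0..1} (\<lambda>_::real. zeta 1 powr p) \<and> (\<forall>y\<in>{0..1}. zeta y powr p \<le> zeta 1 powr p)"
proof
  show "convex_on {0..1} (\<lambda>_::real. zeta 1 powr p)" by (simp add: convex_on_const convex_real_interval)
  show "\<forall>y\<in>{0..1}. zeta y powr p \<le> zeta 1 powr p"
  proof
    fix y :: real assume y: "y \<in> {0..1}"
    have "0 \<le> zeta y" using y by (intro zeta_nonneg) auto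
    moreover have "zeta y \<le> zeta 1" using y by (rule zeta_le1)
    ultimately show "zeta y powr p \<le> zeta 1 powr p" using assms by (intro powr_mono2)
  qed
qed

lemma Phi_bdd: assumes "x \<in> {0..1}"
  shows "bdd_below {f x | f. convex_on {0..1} f \<and> (\<forall>y\<in>{0..1}. zeta y powr p \<le> f y)}"
  using assms by (auto simp: bdd_below_def intro!: exI[of _ "zeta x powr p"])

lemma Phi_lower: assumes "0 \<le> p" "x \<in> {0..1}" shows "zeta x powr p \<le> Phi p x"
  unfolding Phi_def
  apply (rule cInf_greatest)
  using const_in[OF assms(1)] assms(2) by auto

lemma Phi_upper: assumes "0 \<le> p" "x \<in> {0..1}" shows "Phi p x \<le> zeta 1 powr p"
  unfolding Phi_def
  apply (rule cInf_lower)
  using const_in[OF assms(1)] Phi_bdd[OF assms(2)] by auto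

lemma clip_convex:
  fixes f :: "real \<Rightarrow> real"
  assumes f: "convex_on {0..1} f" and h: "h \<in> {0..1}"
  shows "convex_on {0..1} (\<lambda>y. max (f h) (f (max y h)))"
proof (rule convex_onI)
  show "convex {0..1::real}" by simp
  fix t x y :: real assume t: "0 < t" "t < 1" and x: "x \<in> {0..1}" and y: "y \<in> {0..1}"
  define x' where "x' = max x h"
  define y' where "y' = max y h"
  define w where "w = (1 - t) *\<^sub>R x' + t *\<^sub>R y'"
  define z where "z = max ((1 - t) *\<^sub>R x + t *\<^sub>R y) h"
  have x': "x' \<in> {0..1}" "h \<le> x'" "x \<le> x'" using x h by (auto simp: x'_def)
  have y': "y' \<in> {0..1}" "h \<le> y'" "y \<le> y'" using y h by (auto simp: y'_def)
  have hw: "h \<le> w"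
  proof -
    have "(1-t)*h + t*h \<le> (1-t)*x' + t*y'" using x' y' t by (intro add_mono mult_left_mono) auto
    then show ?thesis unfolding w_def by (simp add: algebra_simps)
  qed
  have w1: "w \<in> {0..1}"
  proof -
    have "(1-t)*x' + t*y' \<le> (1-t)*1 + t*1" using x' y' t by (intro add_mono mult_left_mono) auto
    moreover have "0 \<le> (1-t)*x' + t*y'" using x' y' t by simp
    ultimately show ?thesis unfolding w_def by simp
  qed
  have zw: "z \<in> {h..w}"
  proof -
    have "(1 - t) * x + t * y \<le> (1 - t) * x' + t * y'"
      using x' y' t by (intro add_mono mult_left_mono) auto
    then show ?thesis using hw by (auto simp: z_def w_def)
  qed
  have sub: "{h..w} \<subseteq> {0..1}" using h w1 by auto
  have "f z \<le> max (f h) (f w)"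
    by (rule convex_on_le_max[OF convex_on_subset[OF f sub] zw]) (simp add: convex_real_interval)
  moreover have "f w \<le> (1 - t) * f x' + t * f y'"
    unfolding w_def using t x' y' by (intro convex_onD[OF f]) auto
  ultimately have "max (f h) (f z) \<le> max (f h) ((1 - t) * f x' + t * f y')" by auto
  also have "\<dots> \<le> (1 - t) * max (f h) (f x') + t * max (f h) (f y')"
  proof -
    have "f h = (1 - t) * f h + t * f h" by (simp add: algebra_simps)
    also have "\<dots> \<le> (1 - t) * max (f h) (f x') + t * max (f h) (f y')"
      using t by (intro add_mono mult_left_mono) auto
    finally have a: "f h \<le> (1 - t) * max (f h) (f x') + t * max (f h) (f y')" .
    have b: "(1 - t) * f x' + t * f y' \<le> (1 - t) * max (f h) (f x') + t * max (f h) (f y')"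
      using t by (intro add_mono mult_left_mono) auto
    show ?thesis using a b by simp
  qed
  finally show "max (f h) (f (max ((1 - t) *\<^sub>R x + t *\<^sub>R y) h)) \<le>
      (1 - t) * max (f h) (f (max x h)) + t * max (f h) (f (max y h))"
    by (simp add: z_def x'_def y'_def)
qed

lemma Phi_mono: assumes p: "0 \<le> p" and u: "0 \<le> u" "u \<le> h" and h: "h \<le> 1"
  shows "Phi p u \<le> Phi p h"
  unfolding Phi_def[of p h]
proof (rule cInf_greatest)
  show "{f h | f. convex_on {0..1} f \<and> (\<forall>y\<in>{0..1}. zeta y powr p \<le> f y)} \<noteq> {}"
    using const_in[OF p] by blast
  fix v assume "v \<in> {f h | f. convex_on {0..1} f \<and> (\<forall>y\<in>{0..1}. zeta y powr p \<le> f y)}"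
  then obtain f where f: "convex_on {0..1} f" "\<forall>y\<in>{0..1}. zeta y powr p \<le> f y" and v: "v = f h" by blast
  define g where "g = (\<lambda>y. max (f h) (f (max y h)))"
  have hh: "h \<in> {0..1}" using u h by auto
  have gc: "convex_on {0..1} g" unfolding g_def by (rule clip_convex[OF f(1) hh])
  have gm: "\<forall>y\<in>{0..1}. zeta y powr p \<le> g y"
  proof
    fix y :: real assume y: "y \<in> {0..1}"
    show "zeta y powr p \<le> g y"
    proof (cases "y \<le> h")
      case True
      have "zeta y powr p \<le> zeta h powr p" using True y p by (auto intro!: powr_mono2 zeta_mono zeta_nonneg)
      also have "\<dots> \<le> f h" using f(2) hh by auto
      finally show ?thesis unfolding g_def by simp
    next
      case False
      then have "max y h = y" by simp
      moreover have "zeta y powr p \<le> f y" using f(2) y by auto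
      ultimately show ?thesis unfolding g_def by (simp add: le_max_iff_disj)
    qed
  qed
  have "Phi p u \<le> g u" unfolding Phi_def
    apply (rule cInf_lower)
    using gc gm Phi_bdd[of u p] u h by auto
  also have "g u = v" using u v by (simp add: g_def max_def)
  finally show "Phi p u \<le> v" .
qed

lemma phi_pos: assumes "0 < p" "0 < x" "x \<le> 1" shows "0 < phi p x"
proof -
  have "0 < zeta x powr p" using zeta_pos[OF assms(2)] by simp
  also have "\<dots> \<le> Phi p x" using Phi_lower[of p x] assms by auto
  finally show ?thesis unfolding phi_Phi by simp
qed

lemma phi_le: assumes "0 < p" "0 \<le> x" "x \<le> 1" shows "phi p x \<le> zeta 1"
proof -
  have "0 \<le> zeta x powr p" by simp
  also have "\<dots> \<le> Phi p x" using Phi_lower[of p x] assms by auto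
  finally have 0: "0 \<le> Phi p x" .
  have "phi p x \<le> (zeta 1 powr p) powr (1/p)"
    unfolding phi_Phi using Phi_upper[of p x] assms 0 by (intro powr_mono2) auto
  also have "\<dots> = zeta 1" using assms zeta_nonneg[of 1] by (simp add: powr_powr)
  finally show ?thesis .
qed

lemma phi_mono: assumes "0 < p" "0 \<le> u" "u \<le> h" "h \<le> 1" shows "phi p u \<le> phi p h"
proof -
  have "0 \<le> zeta u powr p" by simp
  also have "\<dots> \<le> Phi p u" using Phi_lower[of p u] assms by auto
  finally have 0: "0 \<le> Phi p u" .
  show ?thesis unfolding phi_Phi using Phi_mono[of p u h] assms 0 by (intro powr_mono2) auto
qed




definition ka :: "nat \<Rightarrow> real \<Rightarrow> nat" where
  "ka n t = min (nat \<lfloor>2 ^ n * t\<rfloor>) (2 ^ n - 1)"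
definition aa :: "nat \<Rightarrow> real \<Rightarrow> real" where "aa n t = real (ka n t) / 2 ^ n"
definition bb :: "nat \<Rightarrow> real \<Rightarrow> real" where "bb n t = (real (ka n t) + 1) / 2 ^ n"

lemma upsilon_eq: "upsilon n x t = gmul (x (aa n t)) (dil (2 ^ n * (t - aa n t)) (incr x (aa n t) (bb n t)))"
  by (simp add: upsilon_def aa_def bb_def ka_def Let_def)

lemma dyadic:
  assumes t: "0 \<le> t" "t \<le> 1"
  shows "0 \<le> aa n t" "aa n t \<le> t" "t \<le> bb n t" "bb n t \<le> 1" "bb n t - aa n t = 2 powr - real n"
    "0 \<le> 2 ^ n * (t - aa n t)" "2 ^ n * (t - aa n t) \<le> 1"
proof -
  define N :: nat where "N = 2 ^ n"
  have N1: "1 \<le> N" by (simp add: N_def)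
  have Nr: "(2::real) ^ n = real N" by (simp add: N_def)
  define f where "f = \<lfloor>real N * t\<rfloor>"
  have f0: "0 \<le> f" using t by (simp add: f_def)
  have fle: "real_of_int f \<le> real N * t" by (simp add: f_def)
  have flt: "real N * t < real_of_int f + 1" by (simp add: f_def)
  have k: "ka n t = min (nat f) (N - 1)" by (simp add: ka_def f_def N_def)
  have kle: "real (ka n t) \<le> real N * t" using fle f0 by (simp add: k)
  have kN: "ka n t + 1 \<le> N" using N1 by (simp add: k)
  have tk: "real N * t \<le> real (ka n t) + 1"
  proof (cases "nat f \<le> N - 1")
    case True then show ?thesis using flt f0 by (simp add: k)
  next
    case False then have "ka n t = N - 1" by (simp add: k)
    then show ?thesis using N1 t by (simp add: of_nat_diff)
  qed
  have Np: "0 < real N" using N1 by simp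
  show "0 \<le> aa n t" by (simp add: aa_def)
  show "aa n t \<le> t" using kle Np by (simp add: aa_def Nr field_simps)
  show "t \<le> bb n t" using tk Np by (simp add: bb_def Nr field_simps)
  show "bb n t \<le> 1" using kN Np by (simp add: bb_def Nr field_simps)
  show "bb n t - aa n t = 2 powr - real n"
  proof -
    have "bb n t - aa n t = 1 / 2 ^ n" by (simp add: bb_def aa_def field_simps)
    also have "\<dots> = 2 powr - real n" by (simp add: powr_minus powr_realpow divide_inverse)
    finally show ?thesis .
  qed
  show "0 \<le> 2 ^ n * (t - aa n t)" using kle Np by (simp add: aa_def Nr field_simps)
  have "2 ^ n * (t - aa n t) = real N * t - real (ka n t)" using Np by (simp add: aa_def Nr field_simps)
  then show "2 ^ n * (t - aa n t) \<le> 1" using tk by linarith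
qed

lemma decomp: "gmul (ginv (gmul Q P)) (gmul R S) = gmul (gmul (ginv P) (gmul (ginv Q) R)) S"
  by (simp add: ginv_gmul gmul_assoc)

lemma x_split: "x s = gmul (x a) (incr x a s)"
  by (simp add: incr_def gmul_assoc[symmetric])

lemma incr_same: "incr x a a = gid" by (simp add: incr_def)

lemma ginv_ginv: "ginv (ginv g) = g" by (simp add: ginv_def)

lemma incr_swap: "incr x a b = ginv (incr x b a)"
  by (simp add: incr_def ginv_gmul ginv_ginv)

lemma incr_Gset: "is_Gpath x \<Longrightarrow> u \<in> {0..1} \<Longrightarrow> v \<in> {0..1} \<Longrightarrow> incr x u v \<in> Gset"
  by (auto simp: is_Gpath_def incr_def intro!: Gset_gmul Gset_ginv)

lemma upsilon_Gset: "is_Gpath x \<Longrightarrow> t \<in> {0..1} \<Longrightarrow> upsilon n x t \<in> Gset"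
  using dyadic[of t n] unfolding upsilon_eq
  by (auto simp: is_Gpath_def intro!: Gset_gmul Gset_dil incr_Gset)

lemma small_bounds:
  fixes g :: "('d::finite) grp"
  assumes "g \<in> Gset" "ccnorm g \<le> r"
  shows "norm (fst g) \<le> r" "norm (snd g) \<le> r\<^sup>2"
proof -
  note l = ccnorm_lower[OF assms(1)]
  show "norm (fst g) \<le> r" using l(1) assms(2) by linarith
  have "(ccnorm g)\<^sup>2 \<le> r\<^sup>2" using l(3) assms(2) by (intro power_mono) auto
  then show "norm (snd g) \<le> r\<^sup>2" using l(2) zero_le_power2[of "ccnorm g"] by linarith
qed

lemma scale_bounds:
  fixes g :: "('d::finite) grp"
  assumes "norm (fst g) \<le> r" "norm (snd g) \<le> r\<^sup>2" "0 \<le> \<tau>" "\<tau> \<le> 1"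
  shows "norm (fst (dil \<tau> g)) \<le> r" "norm (snd (dil \<tau> g)) \<le> r\<^sup>2"
proof -
  have "\<tau> * norm (fst g) \<le> 1 * r" using assms by (intro mult_mono) auto
  then show "norm (fst (dil \<tau> g)) \<le> r" using assms by simp
  have "\<tau>\<^sup>2 \<le> 1" using assms by (simp add: power_le_one)
  then have "\<tau>\<^sup>2 * norm (snd g) \<le> 1 * r\<^sup>2" using assms by (intro mult_mono) auto
  then show "norm (snd (dil \<tau> g)) \<le> r\<^sup>2" using assms by simp
qed

theorem mainTheorem19:
  fixes p :: real
  assumes "CARD('d) \<ge> 2" and "2 < p" and "p < 3"
  shows "\<exists>C::real. \<forall>(n::nat) (x :: real \<Rightarrow> ('d::finite) grp).
           is_Gpath x \<and> 0 < hnorm (phi p) x \<and> hnorm (phi p) x < \<infinity> \<longrightarrow>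
           dinf x (upsilon n x) \<le> ereal (C * sqrt (phi p (2 powr - real n))) * hnorm (phi p) x"
proof -
  have p0: "0 < p" using assms by simp
  define B where "B = zeta 1"
  have B0: "0 < B" unfolding B_def by (rule zeta_pos) simp
  define Cd :: real where "Cd = 1 + 4 * CARD('d)"
  have Cd0: "0 \<le> Cd" by (simp add: Cd_def)
  define C where "C = Cd * (8 * sqrt B + sqrt (8 * B))"
  show ?thesis
  proof (intro exI allI impI)
    fix n :: nat and x :: "real \<Rightarrow> 'd grp"
    assume H: "is_Gpath x \<and> 0 < hnorm (phi p) x \<and> hnorm (phi p) x < \<infinity>"
    then have xG: "is_Gpath x" by simp
    obtain K where K: "hnorm (phi p) x = ereal K" using H by (cases "hnorm (phi p) x") auto
    have K0: "0 < K" using H K by simp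
    have hb: "ccnorm (incr x u v) \<le> K * phi p (v - u)" if uv: "0 \<le> u" "u < v" "v \<le> 1" for u v
    proof -
      have "ereal (ccnorm (incr x u v) / phi p (v - u)) \<le> hnorm (phi p) x"
        unfolding hnorm_def by (rule SUP_upper2[of "(u, v)"]) (use uv in auto)
      then have "ccnorm (incr x u v) / phi p (v - u) \<le> K" using K by simp
      moreover have "0 < phi p (v - u)" using uv p0 by (intro phi_pos) auto
      ultimately show ?thesis by (simp add: divide_le_eq)
    qed
    define h :: real where "h = 2 powr - real n"
    have h0: "0 < h" "h \<le> 1"
    proof -
      show "0 < h" by (simp add: h_def)
      have "2 powr - real n \<le> 2 powr 0" by (intro powr_mono) auto
      then show "h \<le> 1" by (simp add: h_def)
    qed
    define ph where "ph = phi p h"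
    have ph0: "0 < ph" unfolding ph_def using h0 p0 by (intro phi_pos) auto
    have phB: "ph \<le> B" unfolding ph_def B_def using h0 p0 by (intro phi_le) auto
    define r where "r = K * ph"
    define R where "R = K * B"
    have r0: "0 \<le> r" using K0 ph0 by (simp add: r_def)
    have R0: "0 \<le> R" using K0 B0 by (simp add: R_def)
    have Eb: "norm (fst (incr x (aa n u) u)) \<le> r \<and> norm (snd (incr x (aa n u) u)) \<le> r\<^sup>2"
      if u: "0 \<le> u" "u \<le> 1" for u
    proof (cases "aa n u = u")
      case True then show ?thesis using r0 by (simp add: incr_same gid_def)
    next
      case False
      note dy = dyadic[OF u, of n]
      have lt: "aa n u < u" using False dy by auto
      have "ccnorm (incr x (aa n u) u) \<le> K * phi p (u - aa n u)" using hb[of "aa n u" u] dy lt u by auto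
      also have "\<dots> \<le> K * ph" unfolding ph_def using K0 dy lt p0 h0
        by (intro mult_left_mono phi_mono) (auto simp: h_def)
      finally have "ccnorm (incr x (aa n u) u) \<le> r" by (simp add: r_def)
      then show ?thesis using small_bounds[OF incr_Gset[OF xG]] dy u by auto
    qed
    have Db: "norm (fst (dil (2 ^ n * (u - aa n u)) (incr x (aa n u) (bb n u)))) \<le> r \<and>
              norm (snd (dil (2 ^ n * (u - aa n u)) (incr x (aa n u) (bb n u)))) \<le> r\<^sup>2"
      if u: "0 \<le> u" "u \<le> 1" for u
    proof -
      note dy = dyadic[OF u, of n]
      have "ccnorm (incr x (aa n u) (bb n u)) \<le> K * phi p (bb n u - aa n u)"
      proof -
        have "aa n u < bb n u" using dy(5) powr_gt_zero[of 2 "- real n"] by linarith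
        then show ?thesis using hb[of "aa n u" "bb n u"] dy by auto
      qed
      also have "\<dots> = r" using dy by (simp add: r_def ph_def h_def)
      finally have c: "ccnorm (incr x (aa n u) (bb n u)) \<le> r" .
      have g: "incr x (aa n u) (bb n u) \<in> Gset" using dy u by (intro incr_Gset[OF xG]) auto
      show ?thesis using scale_bounds[OF small_bounds[OF g c] dy(6) dy(7)] by simp
    qed
    have Mb: "norm (fst (incr x u v)) \<le> R" if uv: "0 \<le> u" "u \<le> 1" "0 \<le> v" "v \<le> 1" for u v
    proof -
      have gen: "norm (fst (incr x a b)) \<le> R" if ab: "0 \<le> a" "a < b" "b \<le> 1" for a b
      proof -
        have "ccnorm (incr x a b) \<le> K * phi p (b - a)" using hb ab by auto
        also have "\<dots> \<le> R" unfolding R_def B_def using K0 ab p0 by (intro mult_left_mono phi_le) auto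
        finally show ?thesis using ccnorm_lower(1)[OF incr_Gset[OF xG]] ab by (meson atLeastAtMost_iff less_eq_real_def order_trans)
      qed
      consider "u < v" | "u = v" | "v < u" by linarith
      then show ?thesis
      proof cases
        case 1 then show ?thesis using gen uv by auto
      next
        case 2 then show ?thesis using R0 by (simp add: incr_same gid_def)
      next
        case 3 then show ?thesis using gen[of v u] uv by (subst incr_swap) simp
      qed
    qed
    have main: "ccnorm (gmul (ginv (incr x s t)) (incr (upsilon n x) s t)) \<le> C * sqrt ph * K"
      if st: "0 \<le> s" "s < t" "t \<le> 1" for s t
    proof -
      note ds = dyadic[of s n] and dt = dyadic[of t n]
      define Es where "Es = incr x (aa n s) s"
      define Et where "Et = incr x (aa n t) t"
      define Ds where "Ds = dil (2 ^ n * (s - aa n s)) (incr x (aa n s) (bb n s))"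
      define Dt where "Dt = dil (2 ^ n * (t - aa n t)) (incr x (aa n t) (bb n t))"
      define M where "M = incr x (aa n s) (aa n t)"
      have ix: "incr x s t = gmul (gmul (ginv Es) M) Et"
        unfolding Es_def Et_def M_def
        by (subst incr_def, subst x_split[of x s "aa n s"], subst x_split[of x t "aa n t"], subst decomp)
           (simp add: incr_def)
      have iy: "incr (upsilon n x) s t = gmul (gmul (ginv Ds) M) Dt"
        unfolding Ds_def Dt_def M_def
        by (subst incr_def, subst upsilon_eq, subst upsilon_eq, subst decomp) (simp add: incr_def)
      define Z where "Z = gmul (ginv (gmul (gmul (ginv Es) M) Et)) (gmul (gmul (ginv Ds) M) Dt)"
      have Es: "norm (fst Es) \<le> r" "norm (snd Es) \<le> r\<^sup>2" using Eb[of s] st unfolding Es_def by auto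
      have Et: "norm (fst Et) \<le> r" "norm (snd Et) \<le> r\<^sup>2" using Eb[of t] st unfolding Et_def by auto
      have Ds: "norm (fst Ds) \<le> r" "norm (snd Ds) \<le> r\<^sup>2" using Db[of s] st unfolding Ds_def by auto
      have Dt: "norm (fst Dt) \<le> r" "norm (snd Dt) \<le> r\<^sup>2" using Db[of t] st unfolding Dt_def by auto
      have M: "norm (fst M) \<le> R" unfolding M_def using Mb ds dt st by auto
      note ke = key_est[OF Es Et Ds Dt M r0 R0]
      have ZG: "Z \<in> Gset"
      proof -
        have "incr x s t \<in> Gset" using st by (intro incr_Gset[OF xG]) auto
        moreover have "incr (upsilon n x) s t \<in> Gset"
          using st upsilon_Gset[OF xG] unfolding incr_def by (auto intro!: Gset_gmul Gset_ginv)
        ultimately show ?thesis unfolding Z_def ix[symmetric] iy[symmetric] by (intro Gset_gmul Gset_ginv)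
      qed
      have "ccnorm Z \<le> Cd * (norm (fst Z) + sqrt (norm (snd Z)))"
        using ccnorm_upper[OF ZG] by (simp add: Cd_def)
      also have "\<dots> \<le> Cd * (4 * r + (4 * r + sqrt (8 * r * R)))"
      proof -
        have "sqrt (norm (snd Z)) \<le> sqrt (16 * r\<^sup>2 + 8 * r * R)" using ke(2) unfolding Z_def by simp
        also have "\<dots> \<le> sqrt (16 * r\<^sup>2) + sqrt (8 * r * R)"
          by (rule sqrt_add_le_add_sqrt) (use r0 R0 in auto)
        also have "sqrt (16 * r\<^sup>2) = 4 * r" using r0 by (simp add: real_sqrt_mult)
        finally show ?thesis using ke(1) Cd0 unfolding Z_def by (intro mult_left_mono add_mono) auto
      qed
      also have "\<dots> \<le> C * sqrt ph * K"
      proof -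
        have sp: "ph \<le> sqrt ph * sqrt B"
        proof -
          have "ph = sqrt ph * sqrt ph" using ph0 by simp
          also have "\<dots> \<le> sqrt ph * sqrt B" using phB ph0 by (intro mult_left_mono) auto
          finally show ?thesis .
        qed
        have a: "8 * r \<le> K * sqrt ph * (8 * sqrt B)"
          unfolding r_def using sp K0 by (simp add: mult_left_mono mult.assoc)
        have b: "sqrt (8 * r * R) = K * sqrt ph * sqrt (8 * B)"
        proof -
          have "8 * r * R = K\<^sup>2 * (ph * (8 * B))" by (simp add: r_def R_def power2_eq_square algebra_simps)
          then have "sqrt (8 * r * R) = sqrt (K\<^sup>2 * (ph * (8 * B)))" by (rule arg_cong)
          also have "\<dots> = \<bar>K\<bar> * (sqrt ph * sqrt (8 * B))" by (simp only: real_sqrt_mult real_sqrt_abs)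
          finally show ?thesis using K0 by simp
        qed
        have "4 * r + (4 * r + sqrt (8 * r * R)) \<le> K * sqrt ph * (8 * sqrt B + sqrt (8 * B))"
          using a b by (simp add: algebra_simps)
        then show ?thesis unfolding C_def using Cd0
          by (smt (verit, ccfv_SIG) mult.assoc mult.commute mult_left_mono)
      qed
      finally show ?thesis unfolding Z_def ix[symmetric] iy[symmetric] .
    qed
    have "dinf x (upsilon n x) \<le> ereal (C * sqrt ph * K)"
      unfolding dinf_def by (rule SUP_least) (use main in auto)
    then show "dinf x (upsilon n x) \<le> ereal (C * sqrt (phi p (2 powr - real n))) * hnorm (phi p) x"
      by (simp add: K ph_def h_def)
  qed
qed


end
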